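(* Let $S\subseteq\mathbb{R}^n$ be a closed set, $H$ an affine hyperplane, and $C\subseteq\mathbb{R}^n$ a convex $S$-free set. Assume $C=\{x\in\mathbb{R}^n : \alpha^\mathsf{T} x\le\beta\ \forall(\alpha,\beta)\in\Gamma\}$ for some family $\Gamma$ of inequalities, and that for every $(\alpha,\beta)\in\Gamma$ there is a point $x\in S\cap C\cap H$ that exposes $(\alpha,\beta)$ with respect to $C$. Then $C$ is maximal $S$-free with respect to $H$.
   Context: A convex set $C$ is $S$-free if $\operatorname{int}(C)\cap S=\emptyset$. Given an affine hyperplane $H$, a closed convex $C$ is $S$-free with respect to $H$ if the interior of $C\cap H$ relative to $H$ does not meet $S\cap H$; it is maximal $S$-free with respect to $H$ if for every closed convex $C'\supseteq C$ that is $S$-free with respect to $H$, $C'\cap H\subseteq C\cap H$. An inequality $\alpha^\mathsf{T} x\le\beta$ (written $(\alpha,\beta)$) is valid for $C$ if it holds on $C$; it is non-trivial if $\alpha\neq0$. A point $x_0$ exposes a valid inequality $(\alpha,\beta)$ with respect to convex $C$ if $\alpha^\mathsf{T} x_0=\beta$ and for every non-trivial valid inequality $\gamma^\mathsf{T} x\le\delta$ for $C$ with $\gamma^\mathsf{T} x_0=\delta$ there is $\mu>0$ with $\gamma=\mu\alpha$ and $\delta=\mu\beta$. *)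

theory Defs
  imports "HOL-Analysis.Analysis"
begin

definition affine_hyperplane :: "'a::euclidean_space set \<Rightarrow> bool" where
  "affine_hyperplane H \<longleftrightarrow> (\<exists>a b. a \<noteq> 0 \<and> H = {x. a \<bullet> x = b})"

definition S_free :: "'a::euclidean_space set \<Rightarrow> 'a set \<Rightarrow> bool" where
  "S_free S C \<longleftrightarrow> interior C \<inter> S = {}"

definition S_free_wrt :: "'a::euclidean_space set \<Rightarrow> 'a set \<Rightarrow> 'a set \<Rightarrow> bool" where
  "S_free_wrt S H C \<longleftrightarrow> ((top_of_set H) interior_of (C \<inter> H)) \<inter> (S \<inter> H) = {}"

definition maximal_S_free_wrt :: "'a::euclidean_space set \<Rightarrow> 'a set \<Rightarrow> 'a set \<Rightarrow> bool" where
  "maximal_S_free_wrt S H C \<longleftrightarrow> closed C \<and> convex C \<and>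
     (\<forall>C'. closed C' \<and> convex C' \<and> C \<subseteq> C' \<and> S_free_wrt S H C' \<longrightarrow> C' \<inter> H \<subseteq> C \<inter> H)"

definition valid_ineq :: "'a::euclidean_space set \<Rightarrow> 'a \<Rightarrow> real \<Rightarrow> bool" where
  "valid_ineq C \<alpha> \<beta> \<longleftrightarrow> (\<forall>x\<in>C. \<alpha> \<bullet> x \<le> \<beta>)"

definition exposes :: "'a::euclidean_space set \<Rightarrow> 'a \<Rightarrow> 'a \<Rightarrow> real \<Rightarrow> bool" where
  "exposes C x0 \<alpha> \<beta> \<longleftrightarrow> \<alpha> \<bullet> x0 = \<beta> \<and>
     (\<forall>\<gamma> \<delta>. \<gamma> \<noteq> 0 \<and> valid_ineq C \<gamma> \<delta> \<and> \<gamma> \<bullet> x0 = \<delta> \<longrightarrow>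
        (\<exists>\<mu>>0. \<gamma> = \<mu> *\<^sub>R \<alpha> \<and> \<delta> = \<mu> * \<beta>))"

end

theory Submission
  imports Defs
begin

lemma interior_if_no_support:
  fixes C' :: "'a::euclidean_space set"
  assumes "convex C'" "x \<in> C'"
    and nos: "\<And>g. g \<noteq> 0 \<Longrightarrow> \<forall>z\<in>C'. g \<bullet> z \<le> g \<bullet> x \<Longrightarrow> False"
  shows "x \<in> interior C'"
proof (rule ccontr)
  assume nx: "x \<notin> interior C'"
  show False
  proof (cases "interior C' = {}")
    case True
    then obtain a b where "a \<noteq> 0" "C' \<subseteq> {z. a \<bullet> z = b}"
      using empty_interior_subset_hyperplane[OF assms(1)] by metis
    moreover have "\<forall>z\<in>C'. a \<bullet> z \<le> a \<bullet> x" using calculation(2) assms(2) by (metis (mono_tags) mem_Collect_eq order_refl subsetD)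
    ultimately show False using nos[of a] by blast
  next
    case False
    then have "rel_interior C' = interior C'"
      using rel_interior_nonempty_interior by blast
    with nx have "x \<notin> rel_interior C'" by simp
    moreover have "x \<in> closure C'" using assms(2) closure_subset by blast
    ultimately obtain a where "a \<noteq> 0" "\<And>y. y \<in> closure C' \<Longrightarrow> a \<bullet> x \<le> a \<bullet> y"
      using supporting_hyperplane_relative_frontier[OF assms(1)] by metis
    then have "\<forall>z\<in>C'. (-a) \<bullet> z \<le> (-a) \<bullet> x" "-a \<noteq> 0"
      using closure_subset by auto
    then show False using nos by blast
  qed
qed

theorem theorem3:
  fixes S H C :: "'a::euclidean_space set" and \<Gamma> :: "('a \<times> real) set"
  assumes "closed S"
    and "affine_hyperplane H"
    and "convex C"
    and "S_free S C"
    and "C = {x. \<forall>(\<alpha>, \<beta>)\<in>\<Gamma>. \<alpha> \<bullet> x \<le> \<beta>}"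
    and "\<forall>(\<alpha>, \<beta>)\<in>\<Gamma>. \<exists>x\<in>S \<inter> C \<inter> H. exposes C x \<alpha> \<beta>"
  shows "maximal_S_free_wrt S H C"
proof -
  have "closed C"
  proof -
    have "C = (\<Inter>p\<in>\<Gamma>. {x. fst p \<bullet> x \<le> snd p})" using assms(5) by fastforce
    then show ?thesis by (auto intro!: closed_INT closed_halfspace_le)
  qed
  moreover have "C' \<inter> H \<subseteq> C \<inter> H"
    if C': "closed C'" "convex C'" "C \<subseteq> C'" "S_free_wrt S H C'" for C'
  proof
    fix y assume y: "y \<in> C' \<inter> H"
    show "y \<in> C \<inter> H"
    proof (rule ccontr)
      assume "y \<notin> C \<inter> H"
      with y assms(5) obtain a b where ab: "(a, b) \<in> \<Gamma>" "a \<bullet> y > b" by auto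
      with assms(6) obtain x where x: "x \<in> S" "x \<in> C" "x \<in> H" "exposes C x a b" by blast
      have "x \<in> interior C'"
      proof (rule interior_if_no_support[OF C'(2)])
        show "x \<in> C'" using x C' by auto
        fix g assume g: "g \<noteq> 0" "\<forall>z\<in>C'. g \<bullet> z \<le> g \<bullet> x"
        then have "valid_ineq C g (g \<bullet> x)" using C'(3) unfolding valid_ineq_def by auto
        with g x(4) obtain \<mu> where mu: "\<mu> > 0" "g = \<mu> *\<^sub>R a" "g \<bullet> x = \<mu> * b"
          unfolding exposes_def by blast
        have "g \<bullet> y \<le> g \<bullet> x" using g y by auto
        then have "\<mu> * (a \<bullet> y) \<le> \<mu> * b" using mu by simp
        then have "a \<bullet> y \<le> b" using mu(1) by simp
        then show False using ab by simp
      qed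
      have "openin (top_of_set H) (H \<inter> interior C')"
        by (auto intro: openin_open_Int)
      moreover have "H \<inter> interior C' \<subseteq> C' \<inter> H" using interior_subset by blast
      ultimately have "H \<inter> interior C' \<subseteq> (top_of_set H) interior_of (C' \<inter> H)"
        by (rule interior_of_maximal[rotated])
      then have "x \<in> (top_of_set H) interior_of (C' \<inter> H)"
        using x(3) \<open>x \<in> interior C'\<close> by blast
      then show False using C'(4) x unfolding S_free_wrt_def by blast
    qed
  qed
  ultimately show ?thesis using assms(3) unfolding maximal_S_free_wrt_def by blast
qed

end
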